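(* Let $N\ge2$, $g\ge1$, and let $A(z)=\sum_{k=0}^{g-1}z^kA^{(k)}$ with $A^{(k)}\in M_N(\mathbb{C})$, $A^{(g-1)}\neq0$, be a polynomial loop of genus $g$, i.e. $A(z)$ is unitary for every $z\in\mathbb{T}=\{z\in\mathbb{C}:|z|=1\}$. Extend $A$ to all $z\in\mathbb{C}$ by the same polynomial formula. Then for all $z\in\mathbb{C}$, $$\bigl(\min(1,|z|^2)\bigr)^{g-1}\,\mathbb{1}_N\;\le\;A(z)^*A(z)\;\le\;\bigl(\max(1,|z|^2)\bigr)^{g-1}\,\mathbb{1}_N,$$ in the order of positive operators on $\mathbb{C}^N$, where $\mathbb{1}_N$ is the identity matrix. *)

theory Defs
  imports "HOL-Analysis.Analysis"
begin

definition cadj :: "complex^'n^'n \<Rightarrow> complex^'n^'n" where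
  "cadj M = (\<chi> i j. cnj (M $ j $ i))"

definition unitary_mat :: "complex^'n^'n \<Rightarrow> bool" where
  "unitary_mat U \<longleftrightarrow> cadj U ** U = mat 1 \<and> U ** cadj U = mat 1"

definition qform :: "complex^'n^'n \<Rightarrow> complex^'n \<Rightarrow> complex" where
  "qform M v = (\<Sum>i\<in>UNIV. cnj (v $ i) * ((M *v v) $ i))"

definition positive_op :: "complex^'n^'n \<Rightarrow> bool" where
  "positive_op M \<longleftrightarrow> (\<forall>v. Im (qform M v) = 0 \<and> Re (qform M v) \<ge> 0)"

definition loewner_le :: "complex^'n^'n \<Rightarrow> complex^'n^'n \<Rightarrow> bool" where
  "loewner_le B C \<longleftrightarrow> positive_op (C - B)"

definition mpoly_eval :: "(nat \<Rightarrow> complex^'n^'n) \<Rightarrow> nat \<Rightarrow> complex \<Rightarrow> complex^'n^'n" where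
  "mpoly_eval Ak g z = (\<Sum>k<g. (\<chi> i j. z ^ k * (Ak k $ i $ j)))"

end

theory Submission
  imports Defs "HOL-Complex_Analysis.Complex_Analysis" "HOL-Computational_Algebra.Polynomial"
begin

no_notation fps_nth (infixl \<open>$\<close> 75)

definition dotc :: "complex^'n \<Rightarrow> complex^'n \<Rightarrow> complex" where
  "dotc x y = (\<Sum>i\<in>UNIV. cnj (x $ i) * y $ i)"

lemma norm_sq_vec: "(norm (x::complex^'n))\<^sup>2 = (\<Sum>i\<in>UNIV. (cmod (x$i))\<^sup>2)"
  unfolding norm_vec_def L2_set_def by (simp add: sum_nonneg)

lemma dotc_self: "dotc x x = of_real ((norm x)\<^sup>2)"
  unfolding dotc_def norm_sq_vec of_real_sum
proof (rule sum.cong)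
  fix i show "cnj (x $ i) * x $ i = complex_of_real ((cmod (x $ i))\<^sup>2)"
    by (subst complex_norm_square) (simp add: mult.commute)
qed simp

lemma dotc_cs: "cmod (dotc x y) \<le> norm x * norm y"
proof -
  have "cmod (dotc x y) \<le> (\<Sum>i\<in>UNIV. cmod (cnj (x $ i) * y $ i))"
    unfolding dotc_def by (rule norm_sum)
  also have "\<dots> = (\<Sum>i\<in>UNIV. \<bar>cmod (x$i)\<bar> * \<bar>cmod (y$i)\<bar>)"
    by (simp add: norm_mult)
  also have "\<dots> \<le> L2_set (\<lambda>i. cmod (x$i)) UNIV * L2_set (\<lambda>i. cmod (y$i)) UNIV"
    by (rule L2_set_mult_ineq)
  finally show ?thesis by (simp add: norm_vec_def)
qed

lemma dotc_sum: "finite A \<Longrightarrow> dotc x (\<Sum>k\<in>A. f k) = (\<Sum>k\<in>A. dotc x (f k))"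
  unfolding dotc_def by (simp add: sum_distrib_left) (rule sum.swap)

lemma dotc_scale: "dotc x (c *s y) = c * dotc x y"
  unfolding dotc_def by (simp add: sum_distrib_left algebra_simps)

lemma dotc_adj: "dotc v (cadj M *v y) = dotc (M *v v) y"
proof -
  have "dotc v (cadj M *v y) = (\<Sum>i\<in>UNIV. \<Sum>j\<in>UNIV. cnj (v $ i) * (cnj (M $ j $ i) * y $ j))"
    unfolding dotc_def cadj_def matrix_vector_mult_def by (simp add: sum_distrib_left)
  also have "\<dots> = (\<Sum>j\<in>UNIV. \<Sum>i\<in>UNIV. cnj (v $ i) * (cnj (M $ j $ i) * y $ j))"
    by (rule sum.swap)
  also have "\<dots> = (\<Sum>j\<in>UNIV. \<Sum>i\<in>UNIV. cnj (M $ j $ i * v $ i) * y $ j)"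
    by (simp add: ac_simps)
  also have "\<dots> = dotc (M *v v) y"
    unfolding dotc_def matrix_vector_mult_def by (simp add: sum_distrib_right)
  finally show ?thesis .
qed

lemma qform_dotc: "qform M v = dotc v (M *v v)"
  unfolding qform_def dotc_def by simp

lemma qform_AA: "qform (cadj M ** M) v = of_real ((norm (M *v v))\<^sup>2)"
  by (simp add: qform_dotc matrix_vector_mul_assoc[symmetric] dotc_adj dotc_self)

lemma mat_mult_vec: "mat c *v v = c *s v"
proof -
  have "(\<Sum>j\<in>UNIV. (if i = j then c else 0) * v $ j) = c * v $ i" for i
  proof -
    have "(\<Sum>j\<in>UNIV. (if i = j then c else 0) * v $ j) = (\<Sum>j\<in>UNIV. if i = j then c * v $ j else 0)"
      by (rule sum.cong) auto
    then show ?thesis by simp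
  qed
  then show ?thesis by (simp add: vec_eq_iff matrix_vector_mult_def mat_def)
qed

lemma qform_mat: "qform (mat c) v = c * of_real ((norm v)\<^sup>2)"
  by (simp add: qform_dotc mat_mult_vec dotc_self dotc_scale)

lemma qform_diff: "qform (M - N) v = qform M v - qform N v"
  unfolding qform_def by (simp add: matrix_vector_mult_def sum_subtractf algebra_simps sum.distrib[symmetric])

lemma mpoly_vec: "mpoly_eval B g w *v u = (\<Sum>k<g. w^k *s (B k *v u))"
proof -
  have "(\<Sum>j\<in>UNIV. (\<Sum>k<g. w ^ k * B k $ i $ j) * u $ j) = (\<Sum>k<g. w ^ k * (\<Sum>j\<in>UNIV. B k $ i $ j * u $ j))" for i
  proof -
    have "(\<Sum>j\<in>UNIV. (\<Sum>k<g. w ^ k * B k $ i $ j) * u $ j) = (\<Sum>j\<in>UNIV. \<Sum>k<g. w ^ k * B k $ i $ j * u $ j)"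
      by (simp add: sum_distrib_right)
    also have "\<dots> = (\<Sum>k<g. \<Sum>j\<in>UNIV. w ^ k * B k $ i $ j * u $ j)"
      by (rule sum.swap)
    also have "\<dots> = (\<Sum>k<g. w ^ k * (\<Sum>j\<in>UNIV. B k $ i $ j * u $ j))"
      by (simp add: sum_distrib_left mult.assoc)
    finally show ?thesis .
  qed
  then show ?thesis
    by (simp add: vec_eq_iff matrix_vector_mult_def mpoly_eval_def)
qed

lemma disk_bound:
  fixes c :: "nat \<Rightarrow> complex"
  assumes "\<And>w. cmod w = 1 \<Longrightarrow> cmod (\<Sum>k<n. c k * w^k) \<le> B" "cmod z \<le> 1"
  shows "cmod (\<Sum>k<n. c k * z^k) \<le> B"
proof -
  have "norm ((\<lambda>w. \<Sum>k<n. c k * w^k) z) \<le> B"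
  proof (rule maximum_modulus_frontier[where f="\<lambda>w. \<Sum>k<n. c k * w^k" and S="cball 0 1"])
    show "(\<lambda>w. \<Sum>k<n. c k * w^k) holomorphic_on interior (cball 0 1)"
      by (intro holomorphic_intros)
    show "continuous_on (closure (cball 0 1)) (\<lambda>w. \<Sum>k<n. c k * w^k)"
      by (intro continuous_intros)
    show "bounded (cball (0::complex) 1)" by simp
    fix w :: complex assume "w \<in> frontier (cball 0 1)"
    then show "norm (\<Sum>k<n. c k * w^k) \<le> B"
      using assms(1) by simp
  next
    show "z \<in> cball 0 1" using assms(2) by simp
  qed
  then show ?thesis by simp
qed

lemma rev_poly:
  fixes c :: "nat \<Rightarrow> complex"
  assumes "w \<noteq> 0"
  shows "(\<Sum>k<g. c (g-1-k) * w^k) = w^(g-1) * (\<Sum>k<g. c k * (inverse w)^k)"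
proof -
  have "w^(g-1) * (\<Sum>k<g. c k * (inverse w)^k) = (\<Sum>k<g. c k * w^(g-1-k))"
    unfolding sum_distrib_left
  proof (rule sum.cong)
    fix k assume "k \<in> {..<g}"
    then have "k \<le> g - 1" by auto
    then have e: "k + (g-1-k) = g-1" by arith
    have "w^(g-1) = w^k * w^(g-1-k)" by (metis e power_add)
    then show "w ^ (g - 1) * (c k * inverse w ^ k) = c k * w ^ (g - 1 - k)"
      using assms by (simp add: power_diff power_inverse field_simps)
  qed simp
  also have "\<dots> = (\<Sum>k<g. c (g - Suc k) * w^(g-1-(g - Suc k)))"
    by (rule sum.nat_diff_reindex[symmetric])
  also have "\<dots> = (\<Sum>k<g. c (g-1-k) * w^k)"
    by (rule sum.cong) auto
  finally show ?thesis by simp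
qed

lemma scalar_bound:
  fixes c :: "nat \<Rightarrow> complex"
  assumes "\<And>w. cmod w = 1 \<Longrightarrow> cmod (\<Sum>k<g. c k * w^k) \<le> B"
  shows "cmod (\<Sum>k<g. c k * z^k) \<le> B * (max 1 (cmod z))^(g-1)"
proof (cases "cmod z \<le> 1")
  case True
  then show ?thesis using disk_bound[OF assms True] by simp
next
  case False
  then have z0: "z \<noteq> 0" by auto
  have circ: "cmod (\<Sum>k<g. c (g-1-k) * w^k) \<le> B" if "cmod w = 1" for w
  proof -
    have w0: "w \<noteq> 0" using that by auto
    have "cmod (\<Sum>k<g. c (g-1-k) * w^k) = cmod (\<Sum>k<g. c k * (inverse w)^k)"
      unfolding rev_poly[OF w0] using that by (simp add: norm_mult norm_power)
    also have "\<dots> \<le> B" using assms[of "inverse w"] that by (simp add: norm_inverse)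
    finally show ?thesis .
  qed
  have iz1: "cmod (inverse z) \<le> 1" using False by (simp add: norm_inverse inverse_le_1_iff)
  have iz: "inverse z \<noteq> 0" using z0 by simp
  have "cmod (\<Sum>k<g. c (g-1-k) * (inverse z)^k) \<le> B"
    by (rule disk_bound[OF circ iz1])
  then have "cmod (inverse z ^ (g-1) * (\<Sum>k<g. c k * (inverse (inverse z))^k)) \<le> B"
    unfolding rev_poly[OF iz] .
  then have "cmod (inverse z ^ (g-1) * (\<Sum>k<g. c k * z^k)) \<le> B"
    by simp
  then have h: "inverse (cmod z) ^ (g-1) * cmod (\<Sum>k<g. c k * z^k) \<le> B"
    by (simp only: norm_mult norm_power norm_inverse)
  have pz: "cmod z ^ (g-1) > 0" using z0 by simp
  have "cmod (\<Sum>k<g. c k * z^k) = (inverse (cmod z) ^ (g-1) * cmod (\<Sum>k<g. c k * z^k)) * cmod z ^ (g-1)"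
    using pz z0 by (simp add: power_inverse field_simps)
  also have "\<dots> \<le> B * cmod z ^ (g-1)"
    using h pz by (intro mult_right_mono) auto
  finally have "cmod (\<Sum>k<g. c k * z^k) \<le> B * cmod z ^ (g-1)" .
  then show ?thesis using False by simp
qed

lemma mat_bound:
  fixes B :: "nat \<Rightarrow> complex^'n^'n"
  assumes "\<And>w u. cmod w = 1 \<Longrightarrow> norm (mpoly_eval B g w *v u) \<le> norm u"
  shows "norm (mpoly_eval B g z *v u) \<le> (max 1 (cmod z))^(g-1) * norm u"
proof -
  define x where "x = mpoly_eval B g z *v u"
  define c where "c k = dotc x (B k *v u)" for k
  have pe: "dotc x (mpoly_eval B g w *v u) = (\<Sum>k<g. c k * w^k)" for w
    by (simp add: mpoly_vec dotc_sum dotc_scale c_def mult.commute)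
  have "cmod (\<Sum>k<g. c k * w^k) \<le> norm x * norm u" if "cmod w = 1" for w
    unfolding pe[symmetric]
    using dotc_cs[of x "mpoly_eval B g w *v u"] assms[OF that, of u]
    by (meson norm_ge_zero order_trans mult_left_mono)
  from scalar_bound[OF this]
  have "cmod (dotc x x) \<le> norm x * norm u * (max 1 (cmod z))^(g-1)"
    using pe[of z] x_def by simp
  then have h: "norm x * norm x \<le> norm x * (norm u * (max 1 (cmod z))^(g-1))"
    by (simp add: dotc_self power2_eq_square mult.assoc norm_mult)
  show ?thesis
  proof (cases "norm x = 0")
    case True then show ?thesis by (simp add: x_def)
  next
    case False
    then have "norm x > 0" by simp
    with h have "norm x \<le> norm u * (max 1 (cmod z))^(g-1)"
      by (simp add: mult_le_cancel_left_pos)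
    then show ?thesis by (simp add: x_def mult.commute)
  qed
qed


lemma norm_smult_vec: "norm (c *s (x::complex^'n)) = cmod c * norm x"
proof -
  have "norm (c *s x) = L2_set (\<lambda>i. cmod c * cmod (x$i)) UNIV"
    by (simp add: norm_vec_def norm_mult)
  also have "\<dots> = cmod c * L2_set (\<lambda>i. cmod (x$i)) UNIV"
    by (rule L2_set_right_distrib[symmetric]) simp
  finally show ?thesis by (simp add: norm_vec_def)
qed

lemma cadj_cadj: "cadj (cadj M) = M"
  by (simp add: cadj_def vec_eq_iff)

lemma iso_of_unitary: "cadj U ** U = mat 1 \<Longrightarrow> norm (U *v v) = norm v"
proof -
  assume h: "cadj U ** U = mat 1"
  have "complex_of_real ((norm (U *v v))\<^sup>2) = complex_of_real ((norm v)\<^sup>2)"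
    using qform_AA[of U v] qform_mat[of 1 v] h by simp
  then have "(norm (U *v v))\<^sup>2 = (norm v)\<^sup>2" using of_real_eq_iff by blast
  then show ?thesis by (simp add: power2_eq_iff_nonneg)
qed

lemma inverse_circle: "cmod w = 1 \<Longrightarrow> inverse w = cnj w"
proof -
  assume "cmod w = 1"
  then have "w * cnj w = 1" using complex_norm_square[of w] by simp
  then show ?thesis by (simp add: inverse_unique)
qed

lemma mpoly_entry: "mpoly_eval B g w $ i $ j = (\<Sum>k<g. w^k * B k $ i $ j)"
  by (simp add: mpoly_eval_def)

lemma circle_infinite: "infinite {w::complex. cmod w = 1}"
proof
  assume fin: "finite {w::complex. cmod w = 1}"
  define f where "f a = Complex a (sqrt (1 - a^2))" for a
  have "f ` {0..1} \<subseteq> {w. cmod w = 1}"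
  proof
    fix w assume "w \<in> f ` {0..1}"
    then obtain a where a: "a \<in> {0..1}" "w = f a" by auto
    then have "a^2 \<le> 1" by (simp add: power_le_one)
    then show "w \<in> {w. cmod w = 1}" using a by (simp add: f_def cmod_def)
  qed
  then have "finite (f ` {0..1})" using fin finite_subset by blast
  moreover have "inj_on f {0..1}" by (rule inj_onI) (simp add: f_def)
  ultimately have "finite {0..(1::real)}" using finite_imageD by blast
  then show False using infinite_Icc[of "0::real" 1] by simp
qed

lemma poly_zero_circle:
  fixes Q :: "complex poly"
  assumes "\<And>w. cmod w = 1 \<Longrightarrow> poly Q w = 0"
  shows "poly Q z = 0"
proof (cases "Q = 0")
  case False
  then have "finite {x. poly Q x = 0}" by (rule poly_roots_finite)
  moreover have "{w::complex. cmod w = 1} \<subseteq> {x. poly Q x = 0}" using assms by auto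
  ultimately have "finite {w::complex. cmod w = 1}" using finite_subset by blast
  then show ?thesis using circle_infinite by blast
qed simp

definition pe :: "(nat \<Rightarrow> complex^'n^'n) \<Rightarrow> nat \<Rightarrow> 'n \<Rightarrow> 'n \<Rightarrow> complex poly" where
  "pe B g i j = (\<Sum>k<g. monom (B k $ i $ j) k)"

lemma poly_pe: "poly (pe B g i j) w = mpoly_eval B g w $ i $ j"
  by (simp add: pe_def poly_sum poly_monom mpoly_entry mult.commute)

lemma loew1:
  assumes "\<And>v. a * (norm v)\<^sup>2 \<le> (norm (M *v v))\<^sup>2"
  shows "loewner_le (mat (complex_of_real a)) (cadj M ** M)"
  unfolding loewner_le_def positive_op_def qform_diff qform_AA qform_mat
  using assms by simp

lemma loew2:
  assumes "\<And>v. (norm (M *v v))\<^sup>2 \<le> a * (norm v)\<^sup>2"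
  shows "loewner_le (cadj M ** M) (mat (complex_of_real a))"
  unfolding loewner_le_def positive_op_def qform_diff qform_AA qform_mat
  using assms by simp

lemma cadj_entry: "cadj (mpoly_eval B g w) $ i $ j = (\<Sum>k<g. cnj w ^ k * cadj (B k) $ i $ j)"
  by (simp add: cadj_def mpoly_entry)

theorem main_bounds:
  fixes Ak :: "nat \<Rightarrow> complex^'n^'n" and g :: nat and z :: complex
  assumes "g \<ge> 1"
    and U: "\<And>w. cmod w = 1 \<Longrightarrow> unitary_mat (mpoly_eval Ak g w)"
  shows "norm (mpoly_eval Ak g z *v v) \<le> (max 1 (cmod z))^(g-1) * norm v"
    and "cmod z ^ (g-1) * norm v \<le> (max 1 (cmod z))^(g-1) * norm (mpoly_eval Ak g z *v v)"
proof -
  let ?A = "mpoly_eval Ak g"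
  define Bt where "Bt k = cadj (Ak (g-1-k))" for k
  let ?B = "mpoly_eval Bt g"
  have isoA: "norm (?A w *v u) = norm u" if "cmod w = 1" for w u
    using U[OF that] iso_of_unitary unfolding unitary_mat_def by blast
  have isoAs: "norm (cadj (?A w) *v u) = norm u" if "cmod w = 1" for w u
    using U[OF that] iso_of_unitary[of "cadj (?A w)"] cadj_cadj unfolding unitary_mat_def by metis
  have Bent: "?B w $ i $ m = w^(g-1) * cadj (?A w) $ i $ m" if "cmod w = 1" for w i m
  proof -
    have w0: "w \<noteq> 0" using that by auto
    have "?B w $ i $ m = (\<Sum>k<g. (\<lambda>k. cadj (Ak k) $ i $ m) (g-1-k) * w^k)"
      by (simp add: mpoly_entry Bt_def mult.commute)
    also have "\<dots> = w^(g-1) * (\<Sum>k<g. cadj (Ak k) $ i $ m * (inverse w)^k)"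
      by (rule rev_poly[OF w0])
    also have "\<dots> = w^(g-1) * cadj (?A w) $ i $ m"
      by (simp add: cadj_entry inverse_circle[OF that] mult.commute)
    finally show ?thesis .
  qed
  have Bvec: "?B w *v u = w^(g-1) *s (cadj (?A w) *v u)" if "cmod w = 1" for w u
    by (simp add: vec_eq_iff matrix_vector_mult_def Bent[OF that] sum_distrib_left mult.assoc)
  have isoB: "norm (?B w *v u) \<le> norm u" if "cmod w = 1" for w u
    using that by (simp add: Bvec norm_smult_vec isoAs norm_power)
  have prod_circ: "(?B w ** ?A w) $ i $ j = (if i = j then w^(g-1) else 0)" if "cmod w = 1" for w i j
  proof -
    have "(?B w ** ?A w) $ i $ j = (\<Sum>m\<in>UNIV. ?B w $ i $ m * ?A w $ m $ j)"
      by (simp add: matrix_matrix_mult_def)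
    also have "\<dots> = w^(g-1) * (\<Sum>m\<in>UNIV. cadj (?A w) $ i $ m * ?A w $ m $ j)"
      by (simp add: Bent[OF that] sum_distrib_left mult.assoc)
    also have "\<dots> = w^(g-1) * (cadj (?A w) ** ?A w) $ i $ j"
      by (simp add: matrix_matrix_mult_def)
    also have "\<dots> = (if i = j then w^(g-1) else 0)"
      using U[OF that] by (simp add: unitary_mat_def mat_def)
    finally show ?thesis .
  qed
  have prod_all: "(?B z ** ?A z) $ i $ j = (if i = j then z^(g-1) else 0)" for i j
  proof -
    define Q where "Q = (\<Sum>m\<in>UNIV. pe Bt g i m * pe Ak g m j) - (if i = j then monom 1 (g-1) else 0)"
    have pQ: "poly Q w = (?B w ** ?A w) $ i $ j - (if i = j then w^(g-1) else 0)" for w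
      by (simp add: Q_def poly_sum poly_pe matrix_matrix_mult_def poly_monom)
    have "poly Q z = 0"
      by (rule poly_zero_circle) (simp add: pQ prod_circ)
    then show ?thesis by (simp add: pQ)
  qed
  then have BA: "?B z ** ?A z = mat (z^(g-1))"
    by (simp add: vec_eq_iff mat_def)
  show UA: "norm (?A z *v v) \<le> (max 1 (cmod z))^(g-1) * norm v"
    by (rule mat_bound) (simp add: isoA)
  have UB: "norm (?B z *v y) \<le> (max 1 (cmod z))^(g-1) * norm y" for y
    by (rule mat_bound) (simp add: isoB)
  have "cmod z ^ (g-1) * norm v = norm (?B z *v (?A z *v v))"
    by (simp add: matrix_vector_mul_assoc BA mat_mult_vec norm_smult_vec norm_power)
  also have "\<dots> \<le> (max 1 (cmod z))^(g-1) * norm (?A z *v v)" by (rule UB)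
  finally show "cmod z ^ (g-1) * norm v \<le> (max 1 (cmod z))^(g-1) * norm (?A z *v v)" .
qed

lemma min_sq: "min 1 ((cmod z)\<^sup>2) = (min 1 (cmod z))\<^sup>2"
proof (cases "cmod z \<le> 1")
  case True
  then have "(cmod z)\<^sup>2 \<le> 1" by (simp add: power_le_one)
  then show ?thesis using True by (simp add: min_def)
next
  case False
  then have "(cmod z)\<^sup>2 > 1" by (simp add: one_less_power)
  then show ?thesis using False by (simp add: min_def)
qed

lemma max_sq: "max 1 ((cmod z)\<^sup>2) = (max 1 (cmod z))\<^sup>2"
proof (cases "cmod z \<le> 1")
  case True
  then have "(cmod z)\<^sup>2 \<le> 1" by (simp add: power_le_one)
  then show ?thesis using True by (simp add: max_def)
next
  case False
  then have "(cmod z)\<^sup>2 > 1" by (simp add: one_less_power)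
  then show ?thesis using False by (simp add: max_def)
qed

theorem corollary5p3:
  fixes Ak :: "nat \<Rightarrow> complex^'n^'n" and g :: nat and z :: complex
  assumes "CARD('n) \<ge> 2"
    and "g \<ge> 1"
    and "Ak (g - 1) \<noteq> 0"
    and "\<And>w. cmod w = 1 \<Longrightarrow> unitary_mat (mpoly_eval Ak g w)"
  shows "loewner_le (mat (complex_of_real ((min 1 ((cmod z)\<^sup>2)) ^ (g - 1))))
                    (cadj (mpoly_eval Ak g z) ** mpoly_eval Ak g z)
       \<and> loewner_le (cadj (mpoly_eval Ak g z) ** mpoly_eval Ak g z)
                    (mat (complex_of_real ((max 1 ((cmod z)\<^sup>2)) ^ (g - 1))))"
proof -
  let ?A = "mpoly_eval Ak g z"
  note ub = main_bounds(1)[OF assms(2) assms(4), of z]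
  note lb = main_bounds(2)[OF assms(2) assms(4), of z]
  have lb': "(min 1 (cmod z))^(g-1) * norm v \<le> norm (?A *v v)" for v
  proof (cases "cmod z \<le> 1")
    case True
    then have "max 1 (cmod z) = 1" "min 1 (cmod z) = cmod z" by auto
    then show ?thesis using lb[of v] by simp
  next
    case False
    then have "cmod z ^ (g-1) * norm v \<le> cmod z ^ (g-1) * norm (?A *v v)"
      using lb[of v] by (simp add: max_def)
    moreover have "cmod z ^ (g-1) > 0"
    proof -
      have "cmod z > 0" using False by linarith
      then show ?thesis by simp
    qed
    ultimately have "norm v \<le> norm (?A *v v)" by (simp add: mult_le_cancel_left_pos)
    then show ?thesis using False by (simp add: min_def)
  qed
  show ?thesis
  proof
    show "loewner_le (mat (complex_of_real ((min 1 ((cmod z)\<^sup>2)) ^ (g - 1)))) (cadj ?A ** ?A)"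
    proof (rule loew1)
      fix v :: "complex^'n"
      have "(min 1 ((cmod z)\<^sup>2)) ^ (g - 1) * (norm v)\<^sup>2 = ((min 1 (cmod z))^(g-1) * norm v)\<^sup>2"
        by (simp add: min_sq power_mult_distrib power_mult[symmetric] mult.commute)
      also have "\<dots> \<le> (norm (?A *v v))\<^sup>2"
        by (rule power_mono[OF lb']) simp
      finally show "(min 1 ((cmod z)\<^sup>2)) ^ (g - 1) * (norm v)\<^sup>2 \<le> (norm (?A *v v))\<^sup>2" .
    qed
    show "loewner_le (cadj ?A ** ?A) (mat (complex_of_real ((max 1 ((cmod z)\<^sup>2)) ^ (g - 1))))"
    proof (rule loew2)
      fix v :: "complex^'n"
      have "(norm (?A *v v))\<^sup>2 \<le> ((max 1 (cmod z))^(g-1) * norm v)\<^sup>2"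
        using ub[of v] by (intro power_mono) auto
      also have "\<dots> = (max 1 ((cmod z)\<^sup>2)) ^ (g - 1) * (norm v)\<^sup>2"
        by (simp add: max_sq power_mult_distrib power_mult[symmetric] mult.commute)
      finally show "(norm (?A *v v))\<^sup>2 \<le> (max 1 ((cmod z)\<^sup>2)) ^ (g - 1) * (norm v)\<^sup>2" .
    qed
  qed
qed

end
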